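(* Let $(X,\perp,R)$ be a monadic orthoframe. Then for every $A\subseteq X$: (1) $R[A]^\perp$ is closed under $R$, i.e. $R[R[A]^\perp]=R[A]^\perp$; (2) $R[A]^{\perp\perp}$ is closed under $R$, i.e. $R[R[A]^{\perp\perp}]=R[A]^{\perp\perp}$; (3) $R[A^{\perp\perp}]\subseteq R[A]^{\perp\perp}$.
   Context: An orthoframe $(X,\perp)$ is a set with an irreflexive symmetric binary relation $\perp$; for $A\subseteq X$, $A^\perp=\{x\in X: a\perp x\text{ for all }a\in A\}$. For a binary relation $R$ on $X$ and $A\subseteq X$, $R[A]=\{y: x\,R\,y\text{ for some }x\in A\}$. A monadic orthoframe is $(X,\perp,R)$ with (M1) $\perp$ an orthogonality relation; (M2) $R$ reflexive and transitive; (M3) for each $x\in X$, $R[R[\{x\}]^\perp]\subseteq R[\{x\}]^\perp$. *)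

theory Defs
  imports Main
begin

definition orthogonality :: "'a set \<Rightarrow> ('a \<Rightarrow> 'a \<Rightarrow> bool) \<Rightarrow> bool" where
  "orthogonality X perp \<longleftrightarrow>
     (\<forall>x y. perp x y \<longrightarrow> x \<in> X \<and> y \<in> X) \<and>
     (\<forall>x\<in>X. \<not> perp x x) \<and>
     (\<forall>x\<in>X. \<forall>y\<in>X. perp x y \<longrightarrow> perp y x)"

definition orth_compl :: "'a set \<Rightarrow> ('a \<Rightarrow> 'a \<Rightarrow> bool) \<Rightarrow> 'a set \<Rightarrow> 'a set" where
  "orth_compl X perp A = {x \<in> X. \<forall>a\<in>A. perp a x}"

definition rel_image :: "('a \<Rightarrow> 'a \<Rightarrow> bool) \<Rightarrow> 'a set \<Rightarrow> 'a set" where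
  "rel_image R A = {y. \<exists>x\<in>A. R x y}"

definition monadic_orthoframe :: "'a set \<Rightarrow> ('a \<Rightarrow> 'a \<Rightarrow> bool) \<Rightarrow> ('a \<Rightarrow> 'a \<Rightarrow> bool) \<Rightarrow> bool" where
  "monadic_orthoframe X perp R \<longleftrightarrow>
     orthogonality X perp \<and>
     (\<forall>x y. R x y \<longrightarrow> x \<in> X \<and> y \<in> X) \<and>
     (\<forall>x\<in>X. R x x) \<and>
     (\<forall>x y z. R x y \<longrightarrow> R y z \<longrightarrow> R x z) \<and>
     (\<forall>x\<in>X. rel_image R (orth_compl X perp (rel_image R {x}))
               \<subseteq> orth_compl X perp (rel_image R {x}))"

end

theory Submission
  imports Defs
begin

lemma closedL:
  assumes M: "monadic_orthoframe X perp R" and S: "S \<subseteq> X" and C: "rel_image R S \<subseteq> S"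
  shows "rel_image R (orth_compl X perp S) = orth_compl X perp S"
proof
  show "rel_image R (orth_compl X perp S) \<subseteq> orth_compl X perp S"
  proof
    fix y assume "y \<in> rel_image R (orth_compl X perp S)"
    then obtain x where x: "x \<in> orth_compl X perp S" "R x y" by (auto simp: rel_image_def)
    have yX: "y \<in> X" using M x(2) unfolding monadic_orthoframe_def by blast
    have "\<forall>s\<in>S. perp s y"
    proof
      fix s assume s: "s \<in> S"
      have sX: "s \<in> X" using s S by blast
      have "x \<in> orth_compl X perp (rel_image R {s})"
        using x(1) C s unfolding orth_compl_def rel_image_def by blast
      hence "y \<in> rel_image R (orth_compl X perp (rel_image R {s}))"
        using x(2) unfolding rel_image_def by blast
      hence "y \<in> orth_compl X perp (rel_image R {s})"
        using M sX unfolding monadic_orthoframe_def by blast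
      moreover have "s \<in> rel_image R {s}" using M sX
        unfolding monadic_orthoframe_def rel_image_def by blast
      ultimately show "perp s y" unfolding orth_compl_def by blast
    qed
    thus "y \<in> orth_compl X perp S" using yX unfolding orth_compl_def by blast
  qed
next
  show "orth_compl X perp S \<subseteq> rel_image R (orth_compl X perp S)"
    using M unfolding monadic_orthoframe_def orth_compl_def rel_image_def by blast
qed

theorem mainTheorem17:
  fixes X :: "'a set" and perp R :: "'a \<Rightarrow> 'a \<Rightarrow> bool" and A :: "'a set"
  assumes "monadic_orthoframe X perp R"
    and "A \<subseteq> X"
  shows "rel_image R (orth_compl X perp (rel_image R A)) = orth_compl X perp (rel_image R A)
    \<and> rel_image R (orth_compl X perp (orth_compl X perp (rel_image R A)))
        = orth_compl X perp (orth_compl X perp (rel_image R A))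
    \<and> rel_image R (orth_compl X perp (orth_compl X perp A))
        \<subseteq> orth_compl X perp (orth_compl X perp (rel_image R A))"
proof -
  note M = assms(1)
  have BX: "rel_image R A \<subseteq> X" using M unfolding monadic_orthoframe_def rel_image_def by blast
  have BC: "rel_image R (rel_image R A) \<subseteq> rel_image R A"
    using M unfolding monadic_orthoframe_def rel_image_def by blast
  have 1: "rel_image R (orth_compl X perp (rel_image R A)) = orth_compl X perp (rel_image R A)"
    by (rule closedL[OF M BX BC])
  have 2: "rel_image R (orth_compl X perp (orth_compl X perp (rel_image R A)))
        = orth_compl X perp (orth_compl X perp (rel_image R A))"
    by (rule closedL[OF M _ equalityD1[OF 1]]) (auto simp: orth_compl_def)
  have AB: "A \<subseteq> rel_image R A" using M assms(2)
    unfolding monadic_orthoframe_def rel_image_def by blast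
  have "orth_compl X perp (orth_compl X perp A) \<subseteq> orth_compl X perp (orth_compl X perp (rel_image R A))"
    using AB unfolding orth_compl_def by blast
  hence "rel_image R (orth_compl X perp (orth_compl X perp A))
      \<subseteq> rel_image R (orth_compl X perp (orth_compl X perp (rel_image R A)))"
    unfolding rel_image_def by blast
  with 1 2 show ?thesis by simp
qed

end
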